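(* Let $k$ be a symmetric positive semidefinite kernel on $\mathbb{R}^d$, $\sigma_n^2>0$, and let $\mathbb{D}_N^x=\{\bm{x}^{(i)}\}_{i=1}^N$ be an input training data set with GP posterior variance $\sigma_N^2(\cdot)$. For $\bm{x}\in\mathbb{R}^d$ and $\rho>0$ let $\mathbb{B}_\rho(\bm{x})=\{\bm{x}'\in\mathbb{D}_N^x:\|\bm{x}'-\bm{x}\|\le\rho\}$ and suppose $|\mathbb{B}_\rho(\bm{x})|\ge1$. Then $$\sigma_N^2(\bm{x})\le\frac{k(\bm{x},\bm{x})\sigma_n^2+|\mathbb{B}_\rho(\bm{x})|\,\xi(\bm{x},\rho)}{|\mathbb{B}_\rho(\bm{x})|\max_{\bm{x}',\bm{x}''\in\mathbb{B}_\rho(\bm{x})}k(\bm{x}',\bm{x}'')+\sigma_n^2},$$ where $\xi(\bm{x},\rho)=k(\bm{x},\bm{x})\max_{\bm{x}',\bm{x}''\in\mathbb{B}_\rho(\bm{x})}k(\bm{x}',\bm{x}'')-\min_{\bm{x}'\in\mathbb{B}_\rho(\bm{x})}k(\bm{x}',\bm{x})^2$.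
   Context: Gaussian process posterior variance: with $K_{N,ij}=k(\bm{x}^{(i)},\bm{x}^{(j)})$, $k_{N,i}(\bm{x})=k(\bm{x},\bm{x}^{(i)})$, $\bm{A}_N=\bm{K}_N+\sigma_n^2\bm{I}_N$, $\sigma_N^2(\bm{x})=k(\bm{x},\bm{x})-\bm{k}_N(\bm{x})^T\bm{A}_N^{-1}\bm{k}_N(\bm{x})$. $|\cdot|$ denotes cardinality (counted with multiplicity). *)

theory Defs
  imports "HOL-Analysis.Analysis"
begin

definition psd_kernel :: "(real^'d \<Rightarrow> real^'d \<Rightarrow> real) \<Rightarrow> bool" where
  "psd_kernel k \<longleftrightarrow>
     (\<forall>x y. k x y = k y x) \<and>
     (\<forall>(n::nat) (p::nat \<Rightarrow> real^'d) (c::nat \<Rightarrow> real).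
        0 \<le> (\<Sum>i<n. \<Sum>j<n. c i * c j * k (p i) (p j)))"

definition gram :: "(real^'d \<Rightarrow> real^'d \<Rightarrow> real) \<Rightarrow> ('n::finite \<Rightarrow> real^'d) \<Rightarrow> real^'n^'n" where
  "gram k X = (\<chi> i j. k (X i) (X j))"

definition kvec :: "(real^'d \<Rightarrow> real^'d \<Rightarrow> real) \<Rightarrow> ('n::finite \<Rightarrow> real^'d) \<Rightarrow> real^'d \<Rightarrow> real^'n" where
  "kvec k X x = (\<chi> i. k x (X i))"

definition post_var :: "(real^'d \<Rightarrow> real^'d \<Rightarrow> real) \<Rightarrow> real \<Rightarrow> ('n::finite \<Rightarrow> real^'d) \<Rightarrow> real^'d \<Rightarrow> real" where
  "post_var k sn2 X x =
     k x x - kvec k X x \<bullet> (matrix_inv (gram k X + sn2 *\<^sub>R mat 1) *v kvec k X x)"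

(* indices of training points in the closed ball of radius rho around x (multiplicity kept) *)
definition ball_idx :: "('n::finite \<Rightarrow> real^'d) \<Rightarrow> real^'d \<Rightarrow> real \<Rightarrow> 'n set" where
  "ball_idx X x \<rho> = {i. norm (X i - x) \<le> \<rho>}"

definition kmax_ball :: "(real^'d \<Rightarrow> real^'d \<Rightarrow> real) \<Rightarrow> ('n::finite \<Rightarrow> real^'d) \<Rightarrow> real^'d \<Rightarrow> real \<Rightarrow> real" where
  "kmax_ball k X x \<rho> = Max {k (X i) (X j) | i j. i \<in> ball_idx X x \<rho> \<and> j \<in> ball_idx X x \<rho>}"

definition xi :: "(real^'d \<Rightarrow> real^'d \<Rightarrow> real) \<Rightarrow> ('n::finite \<Rightarrow> real^'d) \<Rightarrow> real^'d \<Rightarrow> real \<Rightarrow> real" where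
  "xi k X x \<rho> = k x x * kmax_ball k X x \<rho> - Min {(k (X i) x)^2 | i. i \<in> ball_idx X x \<rho>}"

end

theory Submission
  imports Defs
begin

lemma psdD:
  fixes n :: nat and c :: "nat \<Rightarrow> real" and p :: "nat \<Rightarrow> real^'d"
  assumes "psd_kernel k"
  shows "0 \<le> (\<Sum>i<n. \<Sum>j<n. c i * c j * k (p i) (p j))" and "k x y = k y x"
  using assms unfolding psd_kernel_def by auto

lemma quad_form:
  fixes M :: "real^'n^'n"
  shows "u \<bullet> (M *v u) = (\<Sum>i\<in>UNIV. \<Sum>j\<in>UNIV. u$i * u$j * M$i$j)"
  by (simp add: inner_vec_def matrix_vector_mult_def sum_distrib_left ac_simps)

lemma psd_sum:
  fixes X :: "'n::finite \<Rightarrow> real^'d"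
  assumes "psd_kernel k"
  shows "0 \<le> (\<Sum>i\<in>UNIV. \<Sum>j\<in>UNIV. c i * c j * k (X i) (X j))"
proof -
  obtain h where h: "bij_betw h {..<CARD('n)} (UNIV::'n set)"
    using ex_bij_betw_nat_finite[of "UNIV::'n set"] by (auto simp: atLeast0LessThan)
  have r: "(\<Sum>i\<in>UNIV. f i) = (\<Sum>a<CARD('n). f (h a))" for f :: "'n \<Rightarrow> real"
    using sum.reindex_bij_betw[OF h, of f] by simp
  have "(\<Sum>i\<in>UNIV. \<Sum>j\<in>UNIV. c i * c j * k (X i) (X j)) =
        (\<Sum>a<CARD('n). \<Sum>b<CARD('n). (c \<circ> h) a * (c \<circ> h) b * k ((X \<circ> h) a) ((X \<circ> h) b))"
    by (simp add: r)
  also have "\<dots> \<ge> 0" by (rule psdD(1)[OF assms])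
  finally show ?thesis .
qed

lemma psd_diag:
  assumes "psd_kernel k" shows "0 \<le> k a a"
  using psdD(1)[OF assms, where n=1 and c="\<lambda>_. 1" and p="\<lambda>_. a"] by simp

lemma psd_off:
  assumes "psd_kernel k" shows "2 * \<bar>k a b\<bar> \<le> k a a + k b b"
proof -
  have sym: "k b a = k a b" using psdD(2)[OF assms] by metis
  have "0 \<le> k a a + 2 * s * k a b + s * s * k b b" for s
    using psdD(1)[OF assms, where n=2 and c="\<lambda>i. if i = 0 then 1 else s" and p="\<lambda>i. if i = 0 then a else b"]
    by (simp add: numeral_2_eq_2 sym algebra_simps)
  from this[of 1] this[of "-1"] show ?thesis by (simp add: abs_if)
qed

lemma bilin_form:
  fixes M :: "real^'n^'n"
  shows "a \<bullet> (M *v b) = (\<Sum>i\<in>UNIV. \<Sum>j\<in>UNIV. a$i * b$j * M$i$j)"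
  by (simp add: inner_vec_def matrix_vector_mult_def sum_distrib_left ac_simps)

theorem mainTheorem10:
  fixes k :: "real^'d \<Rightarrow> real^'d \<Rightarrow> real"
    and X :: "'n::finite \<Rightarrow> real^'d"
    and sn2 \<rho> :: real and x :: "real^'d"
  assumes "psd_kernel k"
    and "sn2 > 0"
    and "\<rho> > 0"
    and "card (ball_idx X x \<rho>) \<ge> 1"
  shows "post_var k sn2 X x \<le>
    (k x x * sn2 + real (card (ball_idx X x \<rho>)) * xi k X x \<rho>) /
    (real (card (ball_idx X x \<rho>)) * kmax_ball k X x \<rho> + sn2)"
proof -
  note psd = assms(1)
  have ksym: "k a b = k b a" for a b using psdD(2)[OF psd] by metis
  define B where "B = ball_idx X x \<rho>"
  define m where "m = card B"
  define S where "S = {k (X i) (X j) | i j. i \<in> B \<and> j \<in> B}"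
  define T where "T = {(k (X i) x)^2 | i. i \<in> B}"
  define KM where "KM = Max S"
  define A where "A = gram k X + sn2 *\<^sub>R mat 1"
  define v where "v = kvec k X x"
  define w where "w = matrix_inv A *v v"
  have finB: "finite B" by simp
  have m1: "m \<ge> 1" using assms(4) by (simp add: m_def B_def)
  then have Bne: "B \<noteq> {}" unfolding m_def by auto
  have S_eq: "S = (\<lambda>(i,j). k (X i) (X j)) ` (B \<times> B)" unfolding S_def by auto
  have T_eq: "T = (\<lambda>i. (k (X i) x)^2) ` B" unfolding T_def by auto
  have finS: "finite S" "S \<noteq> {}" using Bne by (auto simp: S_eq)
  have finT: "finite T" "T \<noteq> {}" using Bne by (auto simp: T_eq)
  have kle: "k (X i) (X j) \<le> KM" if "i \<in> B" "j \<in> B" for i j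
    unfolding KM_def using finS that by (intro Max_ge) (auto simp: S_def)
  have absle: "\<bar>k (X i) (X j)\<bar> \<le> KM" if "i \<in> B" "j \<in> B" for i j
  proof -
    have "k (X i) (X i) + k (X j) (X j) \<le> 2 * KM"
      using kle[OF that(1) that(1)] kle[OF that(2) that(2)] by linarith
    then show ?thesis using psd_off[OF psd, of "X i" "X j"] by linarith
  qed
  obtain i0 where i0: "i0 \<in> B" using Bne by auto
  have KM0: "0 \<le> KM" using psd_diag[OF psd, of "X i0"] kle[OF i0 i0] by linarith
  have D0: "real m * KM + sn2 > 0" using KM0 assms(2) by (simp add: add_nonneg_pos)
  define D where "D = real m * KM + sn2"
  have "Min T \<in> T" using finT by (rule Min_in)
  then obtain i1 where i1: "i1 \<in> B" "Min T = (k (X i1) x)^2" unfolding T_def by auto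
  define \<mu> where "\<mu> = \<bar>k (X i1) x\<bar>"
  have mu0: "0 \<le> \<mu>" unfolding \<mu>_def by simp
  have mule: "\<mu> \<le> \<bar>k x (X i)\<bar>" if "i \<in> B" for i
  proof -
    have "Min T \<le> (k (X i) x)^2" using finT that by (intro Min_le) (auto simp: T_def)
    then show ?thesis unfolding \<mu>_def using i1 by (simp add: abs_le_square_iff ksym[of x])
  qed
  have qA: "u \<bullet> (A *v u) = (\<Sum>i\<in>UNIV. \<Sum>j\<in>UNIV. u$i * u$j * k (X i) (X j)) + sn2 * (u \<bullet> u)" for u
    unfolding A_def
    by (simp add: matrix_vector_mult_add_rdistrib inner_add_right scaleR_matrix_vector_assoc[symmetric]
        quad_form gram_def)
  have qpos: "u \<noteq> 0 \<Longrightarrow> u \<bullet> (A *v u) > 0" for u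
    using psd_sum[OF psd, of "\<lambda>i. u$i" X] assms(2) by (simp add: qA add_nonneg_pos)
  have qnn: "u \<bullet> (A *v u) \<ge> 0" for u
    using psd_sum[OF psd, of "\<lambda>i. u$i" X] assms(2) by (simp add: qA)
  have Asym: "a \<bullet> (A *v b) = b \<bullet> (A *v a)" for a b
  proof -
    have e: "A$i$j = A$j$i" for i j
      unfolding A_def by (simp add: gram_def mat_def ksym[of "X i"])
    show ?thesis unfolding bilin_form using e
      by (subst sum.swap) (simp add: ac_simps)
  qed
  have injA: "inj ((*v) A)"
  proof (rule injI)
    fix u u' assume "A *v u = A *v u'"
    then have "A *v (u - u') = 0" by (simp add: matrix_vector_mult_diff_distrib)
    then have "(u - u') \<bullet> (A *v (u - u')) = 0" by simp
    then show "u = u'" using qpos[of "u - u'"] by fastforce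
  qed
  have "det A \<noteq> 0"
    using det_nz_iff_inj[OF matrix_vector_mul_linear[of A]] injA by simp
  then have "invertible A" by (simp add: invertible_det_nz)
  then have "\<exists>A'. A ** A' = mat 1 \<and> A' ** A = mat 1" unfolding invertible_def .
  then have "A ** matrix_inv A = mat 1" unfolding matrix_inv_def by (rule someI2_ex) auto
  then have Aw: "A *v w = v" unfolding w_def by (simp add: matrix_vector_mul_assoc)
  have key: "v \<bullet> w \<ge> 2 * (a \<bullet> v) - a \<bullet> (A *v a)" for a
  proof -
    have "0 \<le> (w - a) \<bullet> (A *v (w - a))" by (rule qnn)
    also have "\<dots> = w \<bullet> v - w \<bullet> (A *v a) - a \<bullet> v + a \<bullet> (A *v a)"
      by (simp add: matrix_vector_mult_diff_distrib inner_diff_left inner_diff_right Aw)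
    also have "w \<bullet> (A *v a) = a \<bullet> v" using Asym[of w a] Aw by simp
    finally show ?thesis by (simp add: inner_commute)
  qed
  define t where "t = \<mu> / D"
  have t0: "0 \<le> t" unfolding t_def D_def using mu0 D0 by simp
  define a where "a = (\<chi> i. if i \<in> B then t * sgn (k x (X i)) else 0)"
  have av: "a \<bullet> v \<ge> t * real m * \<mu>"
  proof -
    have "a \<bullet> v = (\<Sum>i\<in>UNIV. if i \<in> B then t * \<bar>k x (X i)\<bar> else 0)"
      unfolding inner_vec_def a_def v_def kvec_def
      by (intro sum.cong) (auto simp: sgn_mult_abs abs_sgn_eq sgn_if)
    also have "\<dots> = (\<Sum>i\<in>B. t * \<bar>k x (X i)\<bar>)"
      by (simp add: sum.inter_restrict[symmetric])
    also have "\<dots> \<ge> (\<Sum>i\<in>B. t * \<mu>)"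
      by (intro sum_mono mult_left_mono mule t0)
    finally show ?thesis by (simp add: m_def ac_simps)
  qed
  have ss: "\<bar>sgn p * sgn q * r\<bar> \<le> \<bar>r\<bar>" for p q r :: real
    by (auto simp: sgn_if abs_mult)
  have aa: "a \<bullet> (A *v a) \<le> real m * t^2 * D"
  proof -
    have "(\<Sum>i\<in>UNIV. \<Sum>j\<in>UNIV. a$i * a$j * k (X i) (X j))
        \<le> (\<Sum>i\<in>UNIV. \<Sum>j\<in>UNIV. if i \<in> B \<and> j \<in> B then t^2 * KM else 0)"
    proof (intro sum_mono)
      fix i j
      show "a$i * a$j * k (X i) (X j) \<le> (if i \<in> B \<and> j \<in> B then t^2 * KM else 0)"
      proof (cases "i \<in> B \<and> j \<in> B")
        case True
        have "a$i * a$j * k (X i) (X j) = t^2 * (sgn (k x (X i)) * sgn (k x (X j)) * k (X i) (X j))"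
          using True by (simp add: a_def power2_eq_square ac_simps)
        also have "\<dots> \<le> t^2 * KM"
          using ss[of "k x (X i)" "k x (X j)" "k (X i) (X j)"] absle[of i j] True
          by (intro mult_left_mono) auto
        finally show ?thesis using True by simp
      qed (auto simp: a_def)
    qed
    also have "\<dots> = (\<Sum>i\<in>UNIV. if i \<in> B then (\<Sum>j\<in>UNIV. if j \<in> B then t^2 * KM else 0) else 0)"
      by (intro sum.cong) auto
    also have "\<dots> = real m * real m * t^2 * KM"
      by (simp add: sum.inter_restrict[symmetric] m_def)
    finally have h1: "(\<Sum>i\<in>UNIV. \<Sum>j\<in>UNIV. a$i * a$j * k (X i) (X j)) \<le> real m * real m * t^2 * KM" .
    have "a \<bullet> a = (\<Sum>i\<in>UNIV. if i \<in> B then t^2 * (sgn (k x (X i)))^2 else 0)"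
      unfolding inner_vec_def a_def by (intro sum.cong) (auto simp: power2_eq_square)
    also have "\<dots> \<le> (\<Sum>i\<in>UNIV. if i \<in> B then t^2 else 0)"
      by (intro sum_mono) (auto simp: sgn_if)
    also have "\<dots> = real m * t^2" by (simp add: sum.inter_restrict[symmetric] m_def)
    finally have h2: "a \<bullet> a \<le> real m * t^2" .
    have "a \<bullet> (A *v a) \<le> real m * real m * t^2 * KM + sn2 * (real m * t^2)"
      unfolding qA using h1 h2 assms(2) by (intro add_mono) auto
    then show ?thesis by (simp add: D_def algebra_simps power2_eq_square)
  qed
  have vw: "v \<bullet> w \<ge> real m * \<mu>^2 / D"
  proof -
    have h0: "v \<bullet> w \<ge> 2 * (t * real m * \<mu>) - real m * t^2 * D"
      using key[of a] av aa by linarith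
    have tD: "t * D = \<mu>" using D0 by (simp add: t_def D_def)
    have e1: "real m * t^2 * D = real m * t * (t * D)" by (simp add: power2_eq_square ac_simps)
    have e2: "real m * t * \<mu> = real m * \<mu>^2 / D" by (simp add: t_def power2_eq_square)
    have "2 * (t * real m * \<mu>) - real m * t^2 * D = real m * \<mu>^2 / D"
      unfolding e1 tD e2[symmetric] by (simp add: algebra_simps)
    with h0 show ?thesis by simp
  qed
  have pv: "post_var k sn2 X x = k x x - v \<bullet> w"
    unfolding post_var_def v_def w_def A_def ..
  have xi_eq: "xi k X x \<rho> = k x x * KM - \<mu>^2"
    unfolding xi_def kmax_ball_def KM_def S_def B_def[symmetric] T_def[symmetric] i1(2) \<mu>_def
    by simp
  have km_eq: "kmax_ball k X x \<rho> = KM"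
    unfolding kmax_ball_def KM_def S_def B_def ..
  have eqf: "k x x - real m * \<mu>^2 / D = (k x x * sn2 + real m * (k x x * KM - \<mu>^2)) / D"
    using D0 by (simp add: D_def field_simps)
  have "k x x - v \<bullet> w \<le> k x x - real m * \<mu>^2 / D" using vw by (rule diff_left_mono)
  then show ?thesis
    unfolding pv xi_eq km_eq B_def[symmetric] m_def[symmetric] D_def[symmetric] eqf .
qed

end
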